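(* Let $\mathcal{H}$ be a real Hilbert space, let $\ell\geq 0$, and let $g\in \Gamma_0(\mathcal{H})$ be such that its Legendre–Fenchel conjugate $g^{\ast}$ is bounded from below and $$\Vert x\Vert-\ell \leq \Vert \operatorname{prox}_g(x)\Vert \quad \text{for all } x\in \mathcal{H}.$$ Then $g(x)-g(0)\leq \ell \Vert x\Vert$ for all $x\in\mathcal{H}$. Moreover, if $\ell=0$, then $g$ is constant.
   Context: $\Gamma_0(\mathcal{H})$ denotes the set of proper, convex, lower semicontinuous functions $\mathcal{H}\to\mathbb{R}\cup\{+\infty\}$. The conjugate is $g^{\ast}(x^* )=\sup_{v\in\mathcal{H}}\{\langle x^*,v\rangle-g(v)\}$. For $g\in\Gamma_0(\mathcal{H})$, $\operatorname{prox}_g(x)=\operatorname{argmin}_{y\in\mathcal{H}}\{g(y)+\tfrac12\Vert x-y\Vert^2\}$. *)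

theory Defs
  imports "HOL-Analysis.Analysis" "HOL-Library.Extended_Real"
begin

text \<open>Functions H -> R \<union> {+\<infinity>} are modelled as ereal-valued functions never taking -\<infinity>.\<close>

definition proper_fun :: "('a \<Rightarrow> ereal) \<Rightarrow> bool" where
  "proper_fun g \<longleftrightarrow> (\<forall>x. g x \<noteq> -\<infinity>) \<and> (\<exists>x. g x \<noteq> \<infinity>)"

definition convex_fun :: "('a::real_vector \<Rightarrow> ereal) \<Rightarrow> bool" where
  "convex_fun g \<longleftrightarrow> (\<forall>x y. \<forall>t::real. 0 \<le> t \<and> t \<le> 1 \<longrightarrow>
      g ((1 - t) *\<^sub>R x + t *\<^sub>R y) \<le> ereal (1 - t) * g x + ereal t * g y)"

definition lsc_fun :: "('a::topological_space \<Rightarrow> ereal) \<Rightarrow> bool" where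
  "lsc_fun g \<longleftrightarrow> (\<forall>x. g x \<le> Liminf (at x) g)"

definition Gamma0 :: "('a::real_normed_vector \<Rightarrow> ereal) set" where
  "Gamma0 = {g. proper_fun g \<and> convex_fun g \<and> lsc_fun g}"

definition conjugate :: "('a::real_inner \<Rightarrow> ereal) \<Rightarrow> 'a \<Rightarrow> ereal" where
  "conjugate g xs = (SUP v. ereal (xs \<bullet> v) - g v)"

definition prox :: "('a::real_inner \<Rightarrow> ereal) \<Rightarrow> 'a \<Rightarrow> 'a" where
  "prox g x = (THE p. \<forall>y. g p + ereal ((1/2) * (norm (x - p))\<^sup>2) \<le> g y + ereal ((1/2) * (norm (x - y))\<^sup>2))"

end

theory Submission
  imports Defs
begin



lemma sq_identity:
  fixes x a b :: "'a::real_inner"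
  shows "(norm (x - ((1 - t) *\<^sub>R a + t *\<^sub>R b)))\<^sup>2 =
     (1 - t) * (norm (x - a))\<^sup>2 + t * (norm (x - b))\<^sup>2 - t * (1 - t) * (norm (a - b))\<^sup>2"
  by (simp add: power2_norm_eq_inner inner_diff_left inner_diff_right inner_add_left
      inner_add_right inner_commute algebra_simps)

lemma lsc_seq:
  fixes g :: "'a::metric_space \<Rightarrow> ereal"
  assumes "lsc_fun g" "y \<longlonglongrightarrow> p" "\<And>n. g (y n) \<le> ereal (R n)" "R \<longlonglongrightarrow> r"
  shows "g p \<le> ereal r"
proof (rule ccontr)
  assume "\<not> g p \<le> ereal r"
  then have "ereal r < g p" by simp
  then obtain z where z: "ereal r < ereal z" "ereal z < g p" using ereal_dense2 by blast
  have "ereal z < Liminf (at p) g" using z assms(1) unfolding lsc_fun_def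
    using less_le_trans by blast
  then have ev: "eventually (\<lambda>w. ereal z < g w) (at p)" by (rule less_LiminfD)
  then obtain d where d: "d > 0" "\<And>w. w \<noteq> p \<Longrightarrow> dist w p < d \<Longrightarrow> ereal z < g w"
    unfolding eventually_at by blast
  have "eventually (\<lambda>n. dist (y n) p < d) sequentially"
    using assms(2) d(1) by (rule tendstoD)
  moreover have "eventually (\<lambda>n. R n < z) sequentially"
    using assms(4) z(1) by (simp add: order_tendstoD(2))
  ultimately have "eventually (\<lambda>n. False) sequentially"
  proof eventually_elim
    case (elim n)
    have "ereal z < g (y n)" using d(2)[of "y n"] elim z(2) by (cases "y n = p") auto
    also have "\<dots> \<le> ereal (R n)" by (rule assms(3))
    finally show False using elim by simp
  qed
  then show False by simp
qed



lemma Gamma0D: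
  assumes "g \<in> Gamma0"
  shows "\<And>x. g x \<noteq> -\<infinity>" "\<exists>x. g x \<noteq> \<infinity>" "convex_fun g" "lsc_fun g"
  using assms unfolding Gamma0_def proper_fun_def by auto

lemma convex_real:
  assumes "convex_fun g" "g a = ereal A" "g b = ereal B" "0 \<le> t" "t \<le> 1"
  shows "g ((1 - t) *\<^sub>R a + t *\<^sub>R b) \<le> ereal ((1 - t) * A + t * B)"
  using assms unfolding convex_fun_def by (metis plus_ereal.simps(1) times_ereal.simps(1))

lemma lower_bound:
  fixes g :: "'a::real_normed_vector \<Rightarrow> ereal"
  assumes "g \<in> Gamma0"
  shows "\<exists>A B. 0 \<le> B \<and> (\<forall>v. ereal (A - B * norm v) \<le> g v)"
proof -
  note G = Gamma0D[OF assms]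
  obtain x0 where x0: "g x0 \<noteq> \<infinity>" using G(2) by blast
  then obtain a where a: "g x0 = ereal a" using G(1)[of x0] by (cases "g x0") auto
  have "ereal (a - 1) < g x0" using a by simp
  also have "g x0 \<le> Liminf (at x0) g" using G(4) unfolding lsc_fun_def by blast
  finally have "ereal (a - 1) < Liminf (at x0) g" .
  then have "eventually (\<lambda>w. ereal (a - 1) < g w) (at x0)" by (rule less_LiminfD)
  then obtain d where d: "d > 0" "\<And>w. w \<noteq> x0 \<Longrightarrow> dist w x0 < d \<Longrightarrow> ereal (a - 1) < g w"
    unfolding eventually_at by blast
  have d': "ereal (a - 1) < g w" if "norm (w - x0) < d" for w
    using d(2)[of w] that a by (cases "w = x0") (auto simp: dist_norm)
  have main: "ereal (a - 1 - 2 / d * norm (v - x0)) \<le> g v" for v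
  proof (cases "g v = \<infinity>")
    case True then show ?thesis by simp
  next
    case False
    then obtain b where b: "g v = ereal b" using G(1)[of v] by (cases "g v") auto
    define \<delta> where "\<delta> = norm (v - x0)"
    show ?thesis
    proof (cases "\<delta> < d")
      case True
      then have "ereal (a - 1) < g v" using d' \<delta>_def by blast
      moreover have "a - 1 - 2 / d * norm (v - x0) \<le> a - 1" using d(1) by simp
      ultimately show ?thesis by (metis ereal_less_eq(3) less_imp_le order_trans)
    next
      case False
      then have \<delta>pos: "\<delta> > 0" "\<delta> \<ge> d" using d(1) by auto
      define t where "t = d / (2 * \<delta>)"
      have t: "0 < t" "t \<le> 1" using \<delta>pos d(1) by (auto simp: t_def field_simps)
      define z where "z = (1 - t) *\<^sub>R x0 + t *\<^sub>R v"
      have "z - x0 = t *\<^sub>R (v - x0)" by (simp add: z_def algebra_simps)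
      then have "norm (z - x0) = t * \<delta>" using t by (simp add: \<delta>_def)
      also have "\<dots> = d / 2" using \<delta>pos by (simp add: t_def)
      finally have "norm (z - x0) < d" using d(1) by simp
      then have "ereal (a - 1) < g z" by (rule d')
      also have "g z \<le> ereal ((1 - t) * a + t * b)"
        unfolding z_def using convex_real[OF G(3) a b] t by simp
      finally have "a - 1 < (1 - t) * a + t * b" by simp
      then have "t * a - 1 < t * b" by (simp add: algebra_simps)
      then have "a - 1 / t < b" using t by (simp add: field_simps)
      moreover have "1 / t = 2 / d * \<delta>" using \<delta>pos d(1) by (simp add: t_def field_simps)
      ultimately show ?thesis using b \<delta>_def by simp
    qed
  qed
  show ?thesis
  proof (intro exI conjI allI)
    show "0 \<le> 2 / d" using d(1) by simp
    fix v
    have "norm (v - x0) \<le> norm v + norm x0" by (rule norm_triangle_ineq4)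
    then have "a - 1 - 2 / d * norm x0 - 2 / d * norm v \<le> a - 1 - 2 / d * norm (v - x0)"
    proof -
      have "2 / d * norm (v - x0) \<le> 2 / d * (norm v + norm x0)"
        using d(1) \<open>norm (v - x0) \<le> norm v + norm x0\<close> by (intro mult_left_mono) auto
      then show ?thesis by (simp add: algebra_simps add_divide_distrib)
    qed
    then show "ereal (a - 1 - 2 / d * norm x0 - 2 / d * norm v) \<le> g v"
      using main[of v] by (metis ereal_less_eq(3) order_trans)
  qed
qed





lemma prox_min_exists:
  fixes g :: "'a::{real_inner, complete_space} \<Rightarrow> ereal"
  assumes "g \<in> Gamma0"
  shows "\<exists>p. g p \<noteq> \<infinity> \<and> (\<forall>y. g p + ereal ((1/2) * (norm (x - p))\<^sup>2) \<le> g y + ereal ((1/2) * (norm (x - y))\<^sup>2))"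
proof -
  note G = Gamma0D[OF assms]
  define D where "D = {y. g y \<noteq> \<infinity>}"
  define Gr where "Gr y = real_of_ereal (g y)" for y
  have gD: "g y = ereal (Gr y)" if "y \<in> D" for y
    using that G(1)[of y] unfolding D_def Gr_def by (cases "g y") auto
  define H where "H y = Gr y + (1/2) * (norm (x - y))\<^sup>2" for y
  obtain A B where AB: "0 \<le> B" "\<And>v. ereal (A - B * norm v) \<le> g v"
    using lower_bound[OF assms] by blast
  define L where "L = A - B * norm x - B\<^sup>2 / 2"
  have Hlow: "L \<le> H y" if "y \<in> D" for y
  proof -
    have "A - B * norm y \<le> Gr y" using AB(2)[of y] gD[OF that] by simp
    moreover have "\<bar>norm y - norm x\<bar> \<le> norm (x - y)"
      by (metis norm_minus_commute norm_triangle_ineq3)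
    then have "(norm y - norm x)\<^sup>2 \<le> (norm (x - y))\<^sup>2"
      by (metis abs_le_square_iff abs_norm_cancel)
    moreover have "0 \<le> (norm y - norm x - B)\<^sup>2" by simp
    ultimately show ?thesis unfolding H_def L_def
      by (simp add: power2_eq_square algebra_simps)
  qed
  have mid: "(1/2) *\<^sub>R a + (1/2) *\<^sub>R b \<in> D \<and>
      H ((1/2) *\<^sub>R a + (1/2) *\<^sub>R b) \<le> (1/2) * H a + (1/2) * H b - (1/8) * (norm (a - b))\<^sup>2"
    if "a \<in> D" "b \<in> D" for a b
  proof -
    have c: "g ((1 - 1/2) *\<^sub>R a + (1/2) *\<^sub>R b) \<le> ereal ((1 - 1/2) * Gr a + (1/2) * Gr b)"
      by (rule convex_real[OF G(3) gD[OF that(1)] gD[OF that(2)]]) auto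
    then have inD: "(1/2) *\<^sub>R a + (1/2) *\<^sub>R b \<in> D" unfolding D_def by auto
    have "Gr ((1/2) *\<^sub>R a + (1/2) *\<^sub>R b) \<le> (1/2) * Gr a + (1/2) * Gr b"
      using c gD[OF inD] by simp
    moreover have "(norm (x - ((1 - 1/2) *\<^sub>R a + (1/2) *\<^sub>R b)))\<^sup>2 =
     (1 - 1/2) * (norm (x - a))\<^sup>2 + (1/2) * (norm (x - b))\<^sup>2 - (1/2) * (1 - 1/2) * (norm (a - b))\<^sup>2"
      by (rule sq_identity)
    ultimately show ?thesis using inD unfolding H_def by (simp add: algebra_simps)
  qed
  obtain x0 where "g x0 \<noteq> \<infinity>" using G(2) by blast
  then have Dne: "x0 \<in> D" unfolding D_def by simp
  define m where "m = Inf (H ` D)"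
  have bdd: "bdd_below (H ` D)" using Hlow by (auto intro!: bdd_belowI2)
  have mle: "m \<le> H y" if "y \<in> D" for y
    unfolding m_def using bdd that by (simp add: cInf_lower)
  have "\<exists>y\<in>D. H y < m + inverse (real (Suc n))" for n
  proof -
    have "Inf (H ` D) < m + inverse (real (Suc n))" unfolding m_def by simp
    then obtain z where "z \<in> H ` D" "z < m + inverse (real (Suc n))"
      using cInf_lessD[of "H ` D"] Dne by blast
    then show ?thesis by auto
  qed
  then obtain ys where ys: "\<And>n. ys n \<in> D" "\<And>n. H (ys n) < m + inverse (real (Suc n))"
    by metis
  have close: "(norm (a - b))\<^sup>2 \<le> 4 * (e1 + e2)"
    if "a \<in> D" "b \<in> D" "H a < m + e1" "H b < m + e2" for a b e1 e2
  proof -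
    have "m \<le> H ((1/2) *\<^sub>R a + (1/2) *\<^sub>R b)" using mid[OF that(1,2)] mle by blast
    then show ?thesis using mid[OF that(1,2)] that(3,4) by simp
  qed
  have "Cauchy ys"
  proof (rule CauchyI)
    fix e :: real assume e: "0 < e"
    obtain M :: nat where M: "8 / e\<^sup>2 < real M" using reals_Archimedean2 by blast
    have Mpos: "0 < real M" using M e by (smt (verit) divide_pos_pos zero_less_power)
    show "\<exists>M. \<forall>m\<ge>M. \<forall>n\<ge>M. norm (ys m - ys n) < e"
    proof (intro exI allI impI)
      fix i j assume ij: "M \<le> i" "M \<le> j"
      have "(norm (ys i - ys j))\<^sup>2 \<le> 4 * (inverse (real (Suc i)) + inverse (real (Suc j)))"
        using close[OF ys(1) ys(1) ys(2) ys(2)] by blast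
      also have "\<dots> \<le> 4 * (inverse (real M) + inverse (real M))"
        using ij Mpos by (intro mult_left_mono add_mono le_imp_inverse_le) auto
      also have "\<dots> = 8 / real M" by (simp add: field_simps)
      also have "\<dots> < e\<^sup>2" using M Mpos e by (simp add: field_simps)
      finally have "(norm (ys i - ys j))\<^sup>2 < e\<^sup>2" .
      then show "norm (ys i - ys j) < e" using e by (simp add: power_less_imp_less_base)
    qed
  qed
  then obtain p where p: "ys \<longlonglongrightarrow> p" using Cauchy_convergent_iff convergent_def by blast
  define R where "R n = m + inverse (real (Suc n)) - (1/2) * (norm (x - ys n))\<^sup>2" for n
  have "g (ys n) \<le> ereal (R n)" for n
    using gD[OF ys(1)[of n]] ys(2)[of n] unfolding R_def H_def by simp
  moreover have "R \<longlonglongrightarrow> m + 0 - (1/2) * (norm (x - p))\<^sup>2"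
    unfolding R_def by (intro tendsto_intros LIMSEQ_inverse_real_of_nat p)
  ultimately have gp0: "g p \<le> ereal (m + 0 - (1/2) * (norm (x - p))\<^sup>2)"
    by (rule lsc_seq[OF G(4) p])
  then have gp: "g p \<le> ereal (m - (1/2) * (norm (x - p))\<^sup>2)" by simp
  then have pD: "p \<in> D" unfolding D_def by auto
  then have Hp: "H p \<le> m" using gp gD[OF pD] unfolding H_def by simp
  show ?thesis
  proof (intro exI conjI allI)
    show "g p \<noteq> \<infinity>" using pD D_def by simp
    fix y
    show "g p + ereal ((1/2) * (norm (x - p))\<^sup>2) \<le> g y + ereal ((1/2) * (norm (x - y))\<^sup>2)"
    proof (cases "y \<in> D")
      case True
      then show ?thesis using gD[OF pD] gD[OF True] Hp mle[OF True] unfolding H_def by simp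
    next
      case False
      then show ?thesis unfolding D_def by simp
    qed
  qed
qed




lemma small_t:
  fixes a b C :: real
  assumes "\<And>t. 0 < t \<Longrightarrow> t \<le> 1 \<Longrightarrow> a \<le> b + t * C"
  shows "a \<le> b"
proof (rule ccontr)
  assume "\<not> a \<le> b"
  then have ab: "0 < a - b" by simp
  define t where "t = min 1 ((a - b) / (2 * (\<bar>C\<bar> + 1)))"
  have t: "0 < t" "t \<le> 1" using ab by (auto simp: t_def)
  have "t * C \<le> t * \<bar>C\<bar>" using t by (simp add: mult_left_mono)
  also have "\<dots> \<le> ((a - b) / (2 * (\<bar>C\<bar> + 1))) * \<bar>C\<bar>"
    by (intro mult_right_mono) (auto simp: t_def)
  also have "\<dots> < a - b"
  proof -
    have "(a - b) * \<bar>C\<bar> < (a - b) * (2 * (\<bar>C\<bar> + 1))" using ab by (intro mult_strict_left_mono) auto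
    then show ?thesis by (simp add: field_simps)
  qed
  finally show False using assms[OF t] by simp
qed

lemma mid_ineq:
  fixes x a b :: "'a::real_inner"
  assumes "convex_fun g" "g a = ereal A" "g b = ereal B"
  shows "g ((1/2) *\<^sub>R a + (1/2) *\<^sub>R b) + ereal ((1/2) * (norm (x - ((1/2) *\<^sub>R a + (1/2) *\<^sub>R b)))\<^sup>2)
     \<le> ereal ((1/2) * (A + (1/2) * (norm (x - a))\<^sup>2) + (1/2) * (B + (1/2) * (norm (x - b))\<^sup>2)
           - (1/8) * (norm (a - b))\<^sup>2)"
proof -
  have c: "g ((1 - 1/2) *\<^sub>R a + (1/2) *\<^sub>R b) \<le> ereal ((1 - 1/2) * A + (1/2) * B)"
    by (rule convex_real[OF assms]) auto
  have "(norm (x - ((1 - 1/2) *\<^sub>R a + (1/2) *\<^sub>R b)))\<^sup>2 =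
     (1 - 1/2) * (norm (x - a))\<^sup>2 + (1/2) * (norm (x - b))\<^sup>2 - (1/2) * (1 - 1/2) * (norm (a - b))\<^sup>2"
    by (rule sq_identity)
  then have e: "(1/2) * (norm (x - ((1/2) *\<^sub>R a + (1/2) *\<^sub>R b)))\<^sup>2 =
     (1/4) * (norm (x - a))\<^sup>2 + (1/4) * (norm (x - b))\<^sup>2 - (1/8) * (norm (a - b))\<^sup>2"
    by simp
  have "g ((1/2) *\<^sub>R a + (1/2) *\<^sub>R b) + ereal ((1/2) * (norm (x - ((1/2) *\<^sub>R a + (1/2) *\<^sub>R b)))\<^sup>2)
     \<le> ereal ((1 - 1/2) * A + (1/2) * B) + ereal ((1/2) * (norm (x - ((1/2) *\<^sub>R a + (1/2) *\<^sub>R b)))\<^sup>2)"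
    using c by (intro add_right_mono) simp
  also have "\<dots> = ereal ((1/2) * (A + (1/2) * (norm (x - a))\<^sup>2) + (1/2) * (B + (1/2) * (norm (x - b))\<^sup>2)
           - (1/8) * (norm (a - b))\<^sup>2)"
    unfolding e by (simp add: algebra_simps)
  finally show ?thesis .
qed

lemma prox_char:
  fixes g :: "'a::{real_inner, complete_space} \<Rightarrow> ereal"
  assumes "g \<in> Gamma0"
  shows "g (prox g x) \<noteq> \<infinity> \<and> (\<forall>y. g (prox g x) + ereal ((1/2) * (norm (x - prox g x))\<^sup>2) \<le> g y + ereal ((1/2) * (norm (x - y))\<^sup>2))"
proof -
  note G = Gamma0D[OF assms]
  define P where "P p = (\<forall>y. g p + ereal ((1/2) * (norm (x - p))\<^sup>2) \<le> g y + ereal ((1/2) * (norm (x - y))\<^sup>2))" for p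
  obtain p0 where p0: "g p0 \<noteq> \<infinity>" "P p0" using prox_min_exists[OF assms, of x] unfolding P_def by blast
  have fin: "g p \<noteq> \<infinity>" if "P p" for p
  proof
    assume "g p = \<infinity>"
    then have "g p + ereal ((1/2) * (norm (x - p))\<^sup>2) = \<infinity>" by simp
    moreover have "g p0 + ereal ((1/2) * (norm (x - p0))\<^sup>2) \<noteq> \<infinity>" using p0(1) by simp
    moreover have "g p + ereal ((1/2) * (norm (x - p))\<^sup>2) \<le> g p0 + ereal ((1/2) * (norm (x - p0))\<^sup>2)"
      using that unfolding P_def by blast
    ultimately show False by simp
  qed
  have uniq: "p = q" if pq: "P p" "P q" for p q
  proof -
    obtain a where a: "g p = ereal a" using fin[OF pq(1)] G(1)[of p] by (cases "g p") auto
    obtain b where b: "g q = ereal b" using fin[OF pq(2)] G(1)[of q] by (cases "g q") auto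
    have 1: "a + (1/2) * (norm (x - p))\<^sup>2 \<le> b + (1/2) * (norm (x - q))\<^sup>2"
      using that(1) a b unfolding P_def by (metis plus_ereal.simps(1) ereal_less_eq(3))
    have 2: "b + (1/2) * (norm (x - q))\<^sup>2 \<le> a + (1/2) * (norm (x - p))\<^sup>2"
      using that(2) a b unfolding P_def by (metis plus_ereal.simps(1) ereal_less_eq(3))
    have "g p + ereal ((1/2) * (norm (x - p))\<^sup>2) \<le> g ((1/2) *\<^sub>R p + (1/2) *\<^sub>R q) + ereal ((1/2) * (norm (x - ((1/2) *\<^sub>R p + (1/2) *\<^sub>R q)))\<^sup>2)"
      using that(1) unfolding P_def by blast
    also have "\<dots> \<le> ereal ((1/2) * (a + (1/2) * (norm (x - p))\<^sup>2) + (1/2) * (b + (1/2) * (norm (x - q))\<^sup>2)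
           - (1/8) * (norm (p - q))\<^sup>2)"
      by (rule mid_ineq[OF G(3) a b])
    finally have "a + (1/2) * (norm (x - p))\<^sup>2 \<le> (1/2) * (a + (1/2) * (norm (x - p))\<^sup>2) + (1/2) * (b + (1/2) * (norm (x - q))\<^sup>2)
           - (1/8) * (norm (p - q))\<^sup>2" using a by simp
    then have "(norm (p - q))\<^sup>2 \<le> 0" using 1 2 by simp
    then show ?thesis by simp
  qed
  have "P (prox g x)" unfolding prox_def P_def[symmetric]
    by (rule theI[of P p0]) (use p0 uniq in auto)
  then show ?thesis using fin unfolding P_def by blast
qed

lemma sq_identity2:
  fixes x p v :: "'a::real_inner"
  shows "(norm (x - ((1 - t) *\<^sub>R p + t *\<^sub>R v)))\<^sup>2 =
     (norm (x - p))\<^sup>2 - 2 * t * ((x - p) \<bullet> (v - p)) + t\<^sup>2 * (norm (v - p))\<^sup>2"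
  unfolding power2_norm_eq_inner by (simp add: inner_diff_left inner_diff_right inner_add_left
      inner_add_right inner_commute algebra_simps power2_eq_square)

lemma prox_var:
  fixes g :: "'a::{real_inner, complete_space} \<Rightarrow> ereal"
  assumes "g \<in> Gamma0"
  shows "g (prox g x) + ereal ((x - prox g x) \<bullet> (v - prox g x)) \<le> g v"
proof (cases "g v = \<infinity>")
  case True then show ?thesis by simp
next
  case False
  note G = Gamma0D[OF assms]
  define p where "p = prox g x"
  have pc: "g p \<noteq> \<infinity>" "\<And>y. g p + ereal ((1/2) * (norm (x - p))\<^sup>2) \<le> g y + ereal ((1/2) * (norm (x - y))\<^sup>2)"
    using prox_char[OF assms, of x] unfolding p_def by auto
  obtain a where a: "g p = ereal a" using pc(1) G(1)[of p] by (cases "g p") auto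
  obtain b where b: "g v = ereal b" using False G(1)[of v] by (cases "g v") auto
  have "a \<le> (b - (x - p) \<bullet> (v - p)) + t * ((1/2) * (norm (v - p))\<^sup>2)" if t: "0 < t" "t \<le> 1" for t
  proof -
    define z where "z = (1 - t) *\<^sub>R p + t *\<^sub>R v"
    have "g p + ereal ((1/2) * (norm (x - p))\<^sup>2) \<le> g z + ereal ((1/2) * (norm (x - z))\<^sup>2)" by (rule pc(2))
    also have "\<dots> \<le> ereal ((1 - t) * a + t * b) + ereal ((1/2) * (norm (x - z))\<^sup>2)"
      unfolding z_def using convex_real[OF G(3) a b] t by (intro add_right_mono) auto
    finally have "a + (1/2) * (norm (x - p))\<^sup>2 \<le> (1 - t) * a + t * b + (1/2) * (norm (x - z))\<^sup>2"
      using a by simp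
    then have "t * a \<le> t * (b - (x - p) \<bullet> (v - p) + t * ((1/2) * (norm (v - p))\<^sup>2))"
      unfolding z_def sq_identity2 by (simp add: algebra_simps power2_eq_square)
    then show ?thesis using t by simp
  qed
  then have "a \<le> b - (x - p) \<bullet> (v - p)" by (rule small_t)
  then show ?thesis using a b unfolding p_def[symmetric] by simp
qed




lemma final_real:
  fixes a l K :: real
  assumes "l < a" "0 \<le> l" "\<And>s. 1 \<le> s \<Longrightarrow> (s * a - l)\<^sup>2 \<le> (s - 1)\<^sup>2 * a\<^sup>2 + 2 * K"
  shows False
proof -
  have apos: "0 < a" using assms by simp
  define s where "s = (\<bar>2 * K\<bar> + a\<^sup>2 + 1) / (2 * a * (a - l)) + 1"
  have dpos: "0 < 2 * a * (a - l)" using apos assms by simp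
  have s1: "1 \<le> s" using dpos by (simp add: s_def)
  have "s * (2 * a * (a - l)) = (\<bar>2 * K\<bar> + a\<^sup>2 + 1) + 2 * a * (a - l)"
  proof -
    have gen: "\<And>Q D::real. D \<noteq> 0 \<Longrightarrow> (Q / D + 1) * D = Q + D" by (simp add: distrib_right)
    show ?thesis unfolding s_def using dpos by (intro gen) linarith
  qed
  then have "2 * s * a * (a - l) = (\<bar>2 * K\<bar> + a\<^sup>2 + 1) + 2 * a * (a - l)"
    by (simp add: algebra_simps)
  then have big: "2 * s * a * (a - l) > 2 * K + a\<^sup>2" using dpos by linarith
  have "(s * a - l)\<^sup>2 - (s - 1)\<^sup>2 * a\<^sup>2 = 2 * s * a * (a - l) - a\<^sup>2 + l\<^sup>2"
    by (simp add: power2_eq_square algebra_simps)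
  moreover have "0 \<le> l\<^sup>2" by simp
  ultimately show False using assms(3)[OF s1] big by linarith
qed




lemma norm_sum_sq:
  fixes a b c :: "'a::real_inner"
  assumes "a = b + c"
  shows "(norm a)\<^sup>2 = (norm b)\<^sup>2 + 2 * (b \<bullet> c) + (norm c)\<^sup>2"
  unfolding assms power2_norm_eq_inner by (simp add: inner_add_left inner_add_right inner_commute)

theorem proposition3:
  fixes g :: "'a::{real_inner, complete_space} \<Rightarrow> ereal" and l :: real
  assumes "l \<ge> 0"
    and "g \<in> Gamma0"
    and "\<exists>c::real. \<forall>y. ereal c \<le> conjugate g y"
    and "\<forall>x. norm x - l \<le> norm (prox g x)"
  shows "g 0 \<noteq> \<infinity> \<and> (\<forall>x. g x - g 0 \<le> ereal (l * norm x))
         \<and> (l = 0 \<longrightarrow> (\<exists>c. \<forall>x. g x = c))"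
proof -
  note G = Gamma0D[OF assms(2)]
  obtain c :: real where c: "\<And>y. ereal c \<le> conjugate g y" using assms(3) by blast
  define P where "P x = prox g x" for x
  define U where "U x = x - P x" for x
  define Gr where "Gr x = real_of_ereal (g x)" for x
  have PU: "x = P x + U x" for x by (simp add: U_def)
  have gP: "g (P x) = ereal (Gr (P x))" for x
    using prox_char[OF assms(2), of x] G(1)[of "P x"] unfolding P_def Gr_def
    by (cases "g (prox g x)") auto
  have var: "ereal (Gr (P x) + U x \<bullet> (v - P x)) \<le> g v" for x v
    using prox_var[OF assms(2), of x v] gP[of x] unfolding P_def U_def by simp
  have varR: "Gr (P x) + U x \<bullet> (P y - P x) \<le> Gr (P y)" for x y
    using var[of x "P y"] gP[of y] by simp
  have hyp: "norm x - l \<le> norm (P x)" for x using assms(4) unfolding P_def by blast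
  have fa: "Gr (P x) \<le> U x \<bullet> P x - c" for x
  proof -
    have "conjugate g (U x) \<le> ereal (U x \<bullet> P x - Gr (P x))"
      unfolding conjugate_def
    proof (rule SUP_least)
      fix v
      show "ereal (U x \<bullet> v) - g v \<le> ereal (U x \<bullet> P x - Gr (P x))"
      proof (cases "g v")
        case (real b)
        then show ?thesis using var[of x v] by (simp add: inner_diff_right)
      next
        case PInf then show ?thesis by simp
      next
        case MInf then show ?thesis using G(1) by simp
      qed
    qed
    with c[of "U x"] have "ereal c \<le> ereal (U x \<bullet> P x - Gr (P x))" by (rule order_trans)
    then show ?thesis by simp
  qed
  have fb: "norm (U x') \<le> l" for x'
  proof (rule ccontr)
    assume "\<not> norm (U x') \<le> l"
    then have al: "l < norm (U x')" by simp
    define u' where "u' = U x'"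
    define p' where "p' = P x'"
    define K where "K = u' \<bullet> p' - Gr p' - c"
    have keyK: "(u' - U x) \<bullet> P x \<le> K" for x
      using varR[of x' x] fa[of x] unfolding K_def u'_def p'_def by (simp add: inner_diff_left inner_diff_right)
    show False
    proof (rule final_real[OF al assms(1)])
      fix s :: real assume s: "1 \<le> s"
      define x where "x = s *\<^sub>R u'"
      have nx: "norm x = s * norm u'" using s by (simp add: x_def)
      have nxu: "norm (x - u') = (s - 1) * norm u'"
      proof -
        have "x - u' = (s - 1) *\<^sub>R u'" by (simp add: x_def algebra_simps)
        then show ?thesis using s by simp
      qed
      have "x - u' = P x + (U x - u')" using PU[of x] by (simp add: algebra_simps)
      then have "(norm (x - u'))\<^sup>2 = (norm (P x))\<^sup>2 + 2 * (P x \<bullet> (U x - u')) + (norm (U x - u'))\<^sup>2"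
        by (rule norm_sum_sq)
      moreover have "P x \<bullet> (U x - u') \<ge> - K" using keyK[of x]
        by (simp add: inner_diff_left inner_diff_right inner_commute)
      moreover have "0 \<le> (norm (U x - u'))\<^sup>2" by simp
      ultimately have "(norm (P x))\<^sup>2 \<le> (norm (x - u'))\<^sup>2 + 2 * K" by linarith
      moreover have "norm u' \<le> s * norm u'" using s mult_right_mono[of 1 s "norm u'"] by simp
      then have "0 \<le> s * norm u' - l" using al u'_def by simp
      then have "(s * norm u' - l)\<^sup>2 \<le> (norm (P x))\<^sup>2"
        using hyp[of x] nx by (intro power_mono) auto
      ultimately show "(s * norm (U x') - l)\<^sup>2 \<le> (s - 1)\<^sup>2 * (norm (U x'))\<^sup>2 + 2 * K"
        using nxu u'_def by (simp add: power_mult_distrib)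
    qed
  qed
  have fc: "norm (U x - U y) \<le> norm (x - y)" for x y
  proof -
    have "U x \<bullet> (P y - P x) + U y \<bullet> (P x - P y) \<le> 0" using varR[of x y] varR[of y x] by simp
    then have mono: "0 \<le> (P x - P y) \<bullet> (U x - U y)"
      by (simp add: inner_diff_left inner_diff_right inner_commute)
    have "x - y = (P x - P y) + (U x - U y)" using PU[of x] PU[of y] by (simp add: algebra_simps)
    then have "(norm (x - y))\<^sup>2 = (norm (P x - P y))\<^sup>2 + 2 * ((P x - P y) \<bullet> (U x - U y)) + (norm (U x - U y))\<^sup>2"
      by (rule norm_sum_sq)
    then have "(norm (U x - U y))\<^sup>2 \<le> (norm (x - y))\<^sup>2" using mono by simp
    then show ?thesis by (rule power2_le_imp_le) simp
  qed
  have dens: "\<exists>zs. (\<lambda>n. P (zs n)) \<longlonglongrightarrow> y" for y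
  proof -
    have "\<exists>z. y + (real n / real (Suc n)) *\<^sub>R U z = z" for n
    proof -
      define kk where "kk = real n / real (Suc n)"
      have lam: "0 \<le> kk" "kk < 1" by (auto simp: kk_def)
      have "\<exists>!z. y + kk *\<^sub>R U z = z"
      proof (rule banach_fix_type[OF lam])
        show "\<forall>z w. dist (y + kk *\<^sub>R U z) (y + kk *\<^sub>R U w) \<le> kk * dist z w"
        proof (intro allI)
          fix z w
          have "dist (y + kk *\<^sub>R U z) (y + kk *\<^sub>R U w) = kk * norm (U z - U w)"
            using lam by (simp add: dist_norm scaleR_diff_right[symmetric])
          also have "\<dots> \<le> kk * dist z w" using fc[of z w] lam by (simp add: dist_norm mult_left_mono)
          finally show "dist (y + kk *\<^sub>R U z) (y + kk *\<^sub>R U w) \<le> kk * dist z w" .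
        qed
      qed
      then show ?thesis unfolding kk_def by blast
    qed
    then have "\<forall>n. \<exists>z. y + (real n / real (Suc n)) *\<^sub>R U z = z" by blast
    then have "\<exists>zs. \<forall>n. y + (real n / real (Suc n)) *\<^sub>R U (zs n) = zs n" by (rule choice)
    then obtain zs where zs: "\<And>n. y + (real n / real (Suc n)) *\<^sub>R U (zs n) = zs n" by blast
    have bound: "norm (P (zs n) - y) \<le> l * inverse (real (Suc n))" for n
    proof -
      have "zs n - y = (y + (real n / real (Suc n)) *\<^sub>R U (zs n)) - y"
        by (subst zs[of n]) (rule refl)
      then have e1: "zs n - y = (real n / real (Suc n)) *\<^sub>R U (zs n)" by simp
      have "P (zs n) - y = (zs n - y) - U (zs n)" by (simp add: U_def)
      also have "\<dots> = (real n / real (Suc n)) *\<^sub>R U (zs n) - U (zs n)" by (simp only: e1)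
      also have "\<dots> = (real n / real (Suc n) - 1) *\<^sub>R U (zs n)" by (simp add: scaleR_diff_left)
      finally have "norm (P (zs n) - y) = \<bar>real n / real (Suc n) - 1\<bar> * norm (U (zs n))" by simp
      also have "\<bar>real n / real (Suc n) - 1\<bar> = inverse (real (Suc n))"
      proof -
        have "real n / real (Suc n) - 1 = - inverse (real (Suc n))" by (simp add: field_simps)
        then show ?thesis by simp
      qed
      finally show ?thesis using fb[of "zs n"] by (simp add: mult_left_mono mult.commute)
    qed
    have "(\<lambda>n. l * inverse (real (Suc n))) \<longlonglongrightarrow> l * 0"
      by (intro tendsto_intros LIMSEQ_inverse_real_of_nat)
    then have lim0: "(\<lambda>n. l * inverse (real (Suc n))) \<longlonglongrightarrow> 0" by simp
    have "(\<lambda>n. P (zs n) - y) \<longlonglongrightarrow> 0"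
      by (rule Lim_null_comparison[OF _ lim0]) (rule always_eventually, rule allI, rule bound)
    then have "(\<lambda>n. (P (zs n) - y) + y) \<longlonglongrightarrow> 0 + y" by (intro tendsto_intros)
    then have "(\<lambda>n. P (zs n)) \<longlonglongrightarrow> y" by simp
    then show ?thesis by (rule exI[where x=zs])
  qed
  have ext: "g y \<le> ereal (A + l * norm y)" if h: "\<And>x. Gr (P x) \<le> A + l * norm (P x)" for A y
  proof -
    obtain zs where zs: "(\<lambda>n. P (zs n)) \<longlonglongrightarrow> y" using dens[of y] by (elim exE)
    show ?thesis
    proof (rule lsc_seq[OF G(4) zs])
      show "g (P (zs n)) \<le> ereal (A + l * norm (P (zs n)))" for n using h gP by simp
      show "(\<lambda>n. A + l * norm (P (zs n))) \<longlonglongrightarrow> A + l * norm y"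
        by (intro tendsto_intros zs)
    qed
  qed
  have "Gr (P x) \<le> - c + l * norm (P x)" for x
  proof -
    have "U x \<bullet> P x \<le> norm (U x) * norm (P x)" by (rule norm_cauchy_schwarz)
    also have "\<dots> \<le> l * norm (P x)" using fb[of x] by (simp add: mult_right_mono)
    finally show ?thesis using fa[of x] by simp
  qed
  then have "g 0 \<le> ereal (- c + l * norm (0::'a))" by (rule ext)
  then have g0fin: "g 0 \<noteq> \<infinity>" by auto
  then obtain G0 where G0: "g 0 = ereal G0" using G(1)[of 0] by (cases "g 0") auto
  have "Gr (P x) \<le> G0 + l * norm (P x)" for x
  proof -
    have "Gr (P x) + U x \<bullet> (0 - P x) \<le> G0" using var[of x 0] G0 by simp
    moreover have "U x \<bullet> P x \<le> norm (U x) * norm (P x)" by (rule norm_cauchy_schwarz)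
    moreover have "norm (U x) * norm (P x) \<le> l * norm (P x)" using fb[of x] by (simp add: mult_right_mono)
    ultimately show ?thesis by simp
  qed
  then have up: "g y \<le> ereal (G0 + l * norm y)" for y by (rule ext)
  have part2: "g x - g 0 \<le> ereal (l * norm x)" for x
  proof -
    obtain b where b: "g x = ereal b" using up[of x] G(1)[of x] by (cases "g x") auto
    then show ?thesis using up[of x] G0 by simp
  qed
  have part3: "\<exists>c. \<forall>x. g x = c" if "l = 0"
  proof (intro exI allI)
    fix x
    obtain b where b: "g x = ereal b" using up[of x] G(1)[of x] by (cases "g x") auto
    obtain b' where b': "g (- x) = ereal b'" using up[of "- x"] G(1)[of "- x"] by (cases "g (- x)") auto
    have "b \<le> G0" "b' \<le> G0" using up[of x] up[of "-x"] b b' that by auto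
    moreover have "g ((1 - 1/2) *\<^sub>R x + (1/2) *\<^sub>R (- x)) \<le> ereal ((1 - 1/2) * b + (1/2) * b')"
      by (rule convex_real[OF G(3) b b']) auto
    then have "G0 \<le> (1/2) * b + (1/2) * b'" using G0 by simp
    ultimately show "g x = g 0" using b G0 by simp
  qed
  show ?thesis using g0fin part2 part3 by blast
qed


end
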